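(* Let $p$ be a prime, let $e\geq2$ and $d\geq2$ be integers and let $\lambda\in\{1,\dots,\min(e,d-1)\}$. The map $$(\alpha_1,\dots,\alpha_d)\longmapsto (p^{\mu-\alpha_1},\dots,p^{\mu-\alpha_d}),\qquad \mu=\Big\lfloor \big(e+\textstyle\sum_{i=1}^d\alpha_i\big)/d\Big\rfloor=\big(e-\lambda+\textstyle\sum_{i=1}^d\alpha_i\big)/d,$$ is a bijection from $\mathcal R_\lambda(d,e)$ onto the set of $d$-dimensional vector-factorisations of $p^{e-\lambda}$. Its inverse is $(p^{\beta_1},\dots,p^{\beta_d})\longmapsto(B-\beta_1,\dots,B-\beta_d)$ where $B=\max(\beta_1,\dots,\beta_d)$.
   Context: $\mathbb N=\{0,1,2,\dots\}$. A $d$-dimensional vector-factorisation of $N\geq1$ is a vector $(v_1,\dots,v_d)\in\mathbb N^d$ with $v_1\cdots v_d=N$. $\mathcal R_\lambda(d,e)$ is the set of all $\alpha=(\alpha_1,\dots,\alpha_d)\in\mathbb N^d$ with $\min(\alpha_1,\dots,\alpha_d)=0$, $\max(\alpha_1,\dots,\alpha_d)\,d<e+\sum_i\alpha_i$ and $e+\sum_i\alpha_i\equiv\lambda\pmod d$. *)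

theory Defs
  imports "HOL-Computational_Algebra.Primes"
begin

definition vec_fact :: "nat \<Rightarrow> nat \<Rightarrow> nat list set" where
  "vec_fact d N = {v. length v = d \<and> prod_list v = N}"

definition R_set :: "nat \<Rightarrow> nat \<Rightarrow> nat \<Rightarrow> nat list set" where
  "R_set lam d e = {\<alpha>. length \<alpha> = d \<and> Min (set \<alpha>) = 0
      \<and> Max (set \<alpha>) * d < e + sum_list \<alpha>
      \<and> (e + sum_list \<alpha>) mod d = lam mod d}"

definition R_to_fact :: "nat \<Rightarrow> nat \<Rightarrow> nat \<Rightarrow> nat list \<Rightarrow> nat list" where
  "R_to_fact p d e \<alpha> = (let \<mu> = (e + sum_list \<alpha>) div d in map (\<lambda>a. p ^ (\<mu> - a)) \<alpha>)"

end

theory Submission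
  imports Defs
begin

lemma pow_prod_list: "prod_list (map (\<lambda>b. (p::nat) ^ b) \<beta>) = p ^ sum_list \<beta>"
  by (induct \<beta>) (auto simp: power_add)

lemma sub_sum_list: "\<forall>b\<in>set \<beta>. b \<le> (B::nat) \<Longrightarrow>
   sum_list (map (\<lambda>b. B - b) \<beta>) + sum_list \<beta> = length \<beta> * B"
  by (induct \<beta>) auto

lemma pow_inj: "prime (p::nat) \<Longrightarrow> inj (\<lambda>b. p ^ b)"
proof (rule injI)
  fix x y assume "prime p" "p ^ x = p ^ y"
  moreover have "1 < p" using \<open>prime p\<close> prime_gt_1_nat by blast
  ultimately show "x = y" by (simp add: power_inject_exp)
qed

lemma P3:
  fixes p e d lam :: nat
  assumes "prime p" and "d \<ge> 2" and "1 \<le> lam" and "lam < d" and "lam \<le> e"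
    and len: "length \<beta> = d" and pr: "map (\<lambda>b. p ^ b) \<beta> \<in> vec_fact d (p ^ (e - lam))"
  shows "map (\<lambda>b. Max (set \<beta>) - b) \<beta> \<in> R_set lam d e
        \<and> R_to_fact p d e (map (\<lambda>b. Max (set \<beta>) - b) \<beta>) = map (\<lambda>b. p ^ b) \<beta>"
proof -
  have p2: "p \<ge> 2" using assms(1) prime_ge_2_nat by blast
  define B where "B = Max (set \<beta>)"
  have ne: "set \<beta> \<noteq> {}" using len assms(2) by auto
  have Bin: "B \<in> set \<beta>" unfolding B_def using ne by simp
  have leB: "\<forall>b\<in>set \<beta>. b \<le> B" unfolding B_def by simp
  have "p ^ sum_list \<beta> = p ^ (e - lam)" using pr unfolding vec_fact_def by (simp add: pow_prod_list)
  hence sb: "sum_list \<beta> = e - lam" using p2 by (simp add: power_inject_exp)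
  define \<alpha> where "\<alpha> = map (\<lambda>b. B - b) \<beta>"
  have sa: "sum_list \<alpha> + (e - lam) = d * B" using sub_sum_list[OF leB] sb len unfolding \<alpha>_def by simp
  have T: "e + sum_list \<alpha> = B * d + lam" using sa assms(5) by (simp add: mult.commute)
  have mu: "(e + sum_list \<alpha>) div d = B" using T assms(4) by simp
  have "0 \<in> set \<alpha>" unfolding \<alpha>_def using Bin by force
  hence min0: "Min (set \<alpha>) = 0" using Min_le[of "set \<alpha>" 0] by simp
  have "set \<alpha> \<noteq> {}" unfolding \<alpha>_def using ne by simp
  hence "Max (set \<alpha>) \<le> B" unfolding \<alpha>_def by (auto simp: Max_le_iff)
  hence "Max (set \<alpha>) * d \<le> B * d" by (rule mult_le_mono1)
  hence "Max (set \<alpha>) * d < e + sum_list \<alpha>" using T assms(3) by linarith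
  moreover have "(e + sum_list \<alpha>) mod d = lam mod d" using T by simp
  ultimately have "\<alpha> \<in> R_set lam d e" unfolding R_set_def using min0 len \<alpha>_def by simp
  moreover have "R_to_fact p d e \<alpha> = map (\<lambda>b. p ^ b) \<beta>"
    unfolding R_to_fact_def Let_def mu unfolding \<alpha>_def using leB by simp
  ultimately show ?thesis unfolding \<alpha>_def B_def by simp
qed

theorem proposition3p2:
  fixes p e d lam :: nat
  assumes "prime p" and "e \<ge> 2" and "d \<ge> 2" and "1 \<le> lam" and "lam \<le> min e (d - 1)"
  shows "(\<forall>\<alpha>\<in>R_set lam d e. (e + sum_list \<alpha>) div d * d = e - lam + sum_list \<alpha>)
    \<and> bij_betw (R_to_fact p d e) (R_set lam d e) (vec_fact d (p ^ (e - lam)))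
    \<and> (\<forall>\<beta>. length \<beta> = d \<and> map (\<lambda>b. p ^ b) \<beta> \<in> vec_fact d (p ^ (e - lam)) \<longrightarrow>
          map (\<lambda>b. Max (set \<beta>) - b) \<beta> \<in> R_set lam d e
        \<and> R_to_fact p d e (map (\<lambda>b. Max (set \<beta>) - b) \<beta>) = map (\<lambda>b. p ^ b) \<beta>)"
proof -
  have p2: "p \<ge> 2" using assms(1) prime_ge_2_nat by blast
  have ld: "lam < d" and le: "lam \<le> e" using assms(3,5) by auto
  have P1: "(e + sum_list \<alpha>) div d * d = e - lam + sum_list \<alpha>" if "\<alpha> \<in> R_set lam d e" for \<alpha>
  proof -
    have "(e + sum_list \<alpha>) mod d = lam" using that ld unfolding R_set_def by simp
    moreover have "(e + sum_list \<alpha>) div d * d + (e + sum_list \<alpha>) mod d = e + sum_list \<alpha>"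
      by (rule div_mult_mod_eq)
    ultimately show ?thesis using le by linarith
  qed
  have lemu: "a \<le> (e + sum_list \<alpha>) div d" if A: "\<alpha> \<in> R_set lam d e" and a: "a \<in> set \<alpha>" for \<alpha> a
  proof -
    define \<mu> where "\<mu> = (e + sum_list \<alpha>) div d"
    have "a \<le> Max (set \<alpha>)" using a by simp
    hence "a * d \<le> Max (set \<alpha>) * d" by simp
    also have "\<dots> < e + sum_list \<alpha>" using A unfolding R_set_def by simp
    also have "\<dots> = \<mu> * d + lam" using P1[OF A] le unfolding \<mu>_def by simp
    also have "\<dots> < (\<mu> + 1) * d" using ld by simp
    finally have "a < \<mu> + 1" by (simp only: mult_less_cancel2)
    thus ?thesis unfolding \<mu>_def by simp
  qed
  have P3': "\<forall>\<beta>. length \<beta> = d \<and> map (\<lambda>b. p ^ b) \<beta> \<in> vec_fact d (p ^ (e - lam)) \<longrightarrow>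
          map (\<lambda>b. Max (set \<beta>) - b) \<beta> \<in> R_set lam d e
        \<and> R_to_fact p d e (map (\<lambda>b. Max (set \<beta>) - b) \<beta>) = map (\<lambda>b. p ^ b) \<beta>"
    using P3[OF assms(1,3,4) ld le] by blast
  define ex where "ex = (\<lambda>\<alpha>::nat list. map (\<lambda>a. (e + sum_list \<alpha>) div d - a) \<alpha>)"
  have Rex: "R_to_fact p d e \<alpha> = map (\<lambda>b. p ^ b) (ex \<alpha>)" for \<alpha>
    unfolding R_to_fact_def ex_def Let_def by simp
  have backeq: "\<alpha> = map (\<lambda>b. Max (set (ex \<alpha>)) - b) (ex \<alpha>)" if A: "\<alpha> \<in> R_set lam d e" for \<alpha>
  proof -
    define \<mu> where "\<mu> = (e + sum_list \<alpha>) div d"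
    have le\<mu>: "\<forall>a\<in>set \<alpha>. a \<le> \<mu>" using lemu[OF A] unfolding \<mu>_def by blast
    have ne: "set \<alpha> \<noteq> {}" using A assms(3) unfolding R_set_def by auto
    have "Min (set \<alpha>) \<in> set \<alpha>" using ne by simp
    hence z: "0 \<in> set \<alpha>" using A unfolding R_set_def by simp
    have "Max (set (ex \<alpha>)) = \<mu>" unfolding ex_def \<mu>_def[symmetric]
    proof (rule Max_eqI)
      show "\<mu> \<in> set (map (\<lambda>a. \<mu> - a) \<alpha>)" using z by force
    qed auto
    thus ?thesis unfolding ex_def \<mu>_def[symmetric] using le\<mu> by (simp add: map_idI)
  qed
  have img: "R_to_fact p d e \<alpha> \<in> vec_fact d (p ^ (e - lam))" if A: "\<alpha> \<in> R_set lam d e" for \<alpha>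
  proof -
    define \<mu> where "\<mu> = (e + sum_list \<alpha>) div d"
    have le\<mu>: "\<forall>a\<in>set \<alpha>. a \<le> \<mu>" using lemu[OF A] unfolding \<mu>_def by blast
    have len: "length \<alpha> = d" using A unfolding R_set_def by simp
    have "sum_list (ex \<alpha>) + sum_list \<alpha> = d * \<mu>"
      using sub_sum_list[OF le\<mu>] len unfolding ex_def \<mu>_def[symmetric] by simp
    moreover have "\<mu> * d = e - lam + sum_list \<alpha>" using P1[OF A] unfolding \<mu>_def .
    ultimately have "sum_list (ex \<alpha>) = e - lam" by (simp add: mult.commute)
    hence "prod_list (map (\<lambda>b. p ^ b) (ex \<alpha>)) = p ^ (e - lam)" by (simp only: pow_prod_list)
    moreover have "length (ex \<alpha>) = d" using len by (simp add: ex_def)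
    ultimately show ?thesis unfolding vec_fact_def Rex by simp
  qed
  have inj: "inj_on (R_to_fact p d e) (R_set lam d e)"
  proof (rule inj_onI)
    fix x y assume x: "x \<in> R_set lam d e" and y: "y \<in> R_set lam d e"
      and eq: "R_to_fact p d e x = R_to_fact p d e y"
    have "ex x = ex y" using eq unfolding Rex using pow_inj[OF assms(1)]
      by (simp add: inj_map_eq_map)
    thus "x = y" using backeq[OF x] backeq[OF y] by metis
  qed
  have surj: "vec_fact d (p ^ (e - lam)) \<subseteq> R_to_fact p d e ` R_set lam d e"
  proof
    fix v assume v: "v \<in> vec_fact d (p ^ (e - lam))"
    have "\<forall>x\<in>set v. \<exists>j. x = p ^ j"
    proof
      fix x assume "x \<in> set v"
      hence "x dvd p ^ (e - lam)" using v prod_list_dvd unfolding vec_fact_def by fastforce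
      thus "\<exists>j. x = p ^ j" using divides_primepow_nat[OF assms(1)] by blast
    qed
    then obtain g where g: "\<forall>x\<in>set v. x = p ^ g x" by metis
    define \<beta> where "\<beta> = map g v"
    have vb: "v = map (\<lambda>b. p ^ b) \<beta>" unfolding \<beta>_def using g by (simp add: map_idI)
    have lb: "length \<beta> = d" using v unfolding \<beta>_def vec_fact_def by simp
    from P3'[rule_format, of \<beta>] lb v vb
    have h: "map (\<lambda>b. Max (set \<beta>) - b) \<beta> \<in> R_set lam d e"
      "R_to_fact p d e (map (\<lambda>b. Max (set \<beta>) - b) \<beta>) = v" by auto
    show "v \<in> R_to_fact p d e ` R_set lam d e" by (rule image_eqI[where x="map (\<lambda>b. Max (set \<beta>) - b) \<beta>"]) (use h in auto)
  qed
  have "bij_betw (R_to_fact p d e) (R_set lam d e) (vec_fact d (p ^ (e - lam)))"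
    unfolding bij_betw_def using inj surj img by blast
  thus ?thesis using P1 P3' by blast
qed

end
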